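(* Let $s_1<\dots<s_n$ be reals and $Z(n,d)\subseteq\mathbb{R}^d$ the cyclic zonotope they define. The poset of proper faces of $Z(n,d)$, ordered by inclusion, is isomorphic to the induced subposet of $\Lambda_n$ consisting of those $\lambda$ with $m(\lambda)\le d-1$.
   Context: $Z(n,d)=\{\sum_{i=1}^n c_iu_i:0\le c_i\le1\}$ with $u_i=(1,s_i,\dots,s_i^{d-1})$. Proper faces are the nonempty faces different from $Z(n,d)$. $\Lambda_n=\{0,+,-\}^n$, partially ordered componentwise by the order on $\{0,+,-\}$ with relations $+<0$ and $-<0$ (and $+,-$ incomparable). For $\lambda=(\lambda_1,\dots,\lambda_n)\in\Lambda_n$: an even gap is a pair of indices $i<j$ with $\lambda_i,\lambda_j$ nonzero of opposite signs, $\lambda_r=0$ for all $i<r<j$, and $j-i-1$ even (possibly zero); an odd gap is a pair $i<j$ with $\lambda_i,\lambda_j$ nonzero of the same sign, $\lambda_r=0$ for all $i<r<j$, and $j-i-1$ odd. $m(\lambda)$ is the number of even gaps plus the number of odd gaps plus the number of zero entries of $\lambda$. *)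

theory Defs
  imports "HOL-Analysis.Analysis"
begin

text \<open>Moment-curve vector u_i = (1, s_i, ..., s_i^(d-1)) in real^'d; the coordinate
  indexed by k :: 'd is the power given by the rank of k in the linear order on 'd,
  so the coordinates run through the exponents 0, ..., CARD('d) - 1.\<close>
definition moment_vec :: "real \<Rightarrow> real ^ ('d::{finite,linorder})" where
  "moment_vec t = (\<chi> k. t ^ card {j::'d. j < k})"

definition cyclic_zonotope :: "nat \<Rightarrow> (nat \<Rightarrow> real) \<Rightarrow> (real ^ ('d::{finite,linorder})) set" where
  "cyclic_zonotope n s =
     {x. \<exists>c::nat \<Rightarrow> real. (\<forall>i\<in>{1..n}. 0 \<le> c i \<and> c i \<le> 1) \<and>
           x = (\<Sum>i=1..n. c i *\<^sub>R moment_vec (s i))}"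

definition proper_faces :: "'a::real_vector set \<Rightarrow> 'a set set" where
  "proper_faces Z = {F. F face_of Z \<and> F \<noteq> {} \<and> F \<noteq> Z}"

datatype sgn = SZero | SPlus | SMinus

definition sgn_le :: "sgn \<Rightarrow> sgn \<Rightarrow> bool" where
  "sgn_le a b \<longleftrightarrow> a = b \<or> b = SZero"

text \<open>Lambda_n: sign vectors of length n (entry i of the paper is position i-1 of the list).\<close>
definition Lambda :: "nat \<Rightarrow> sgn list set" where
  "Lambda n = {l. length l = n}"

definition lam_le :: "sgn list \<Rightarrow> sgn list \<Rightarrow> bool" where
  "lam_le l1 l2 \<longleftrightarrow> length l1 = length l2 \<and> (\<forall>i<length l1. sgn_le (l1 ! i) (l2 ! i))"

definition even_gaps :: "sgn list \<Rightarrow> (nat \<times> nat) set" where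
  "even_gaps l = {(i, j). i < j \<and> j < length l \<and> l ! i \<noteq> SZero \<and> l ! j \<noteq> SZero \<and>
      l ! i \<noteq> l ! j \<and> (\<forall>r. i < r \<and> r < j \<longrightarrow> l ! r = SZero) \<and> even (j - i - 1)}"

definition odd_gaps :: "sgn list \<Rightarrow> (nat \<times> nat) set" where
  "odd_gaps l = {(i, j). i < j \<and> j < length l \<and> l ! i \<noteq> SZero \<and> l ! j \<noteq> SZero \<and>
      l ! i = l ! j \<and> (\<forall>r. i < r \<and> r < j \<longrightarrow> l ! r = SZero) \<and> odd (j - i - 1)}"

definition m_val :: "sgn list \<Rightarrow> nat" where
  "m_val l = card (even_gaps l) + card (odd_gaps l) + card {i. i < length l \<and> l ! i = SZero}"

end

theory Submission
  imports Defs "HOL-Computational_Algebra.Polynomial" "HOL-Analysis.Analysis"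
begin


definition sg :: "real \<Rightarrow> sgn" where
  "sg w = (if w > 0 then SPlus else if w < 0 then SMinus else SZero)"

definition cons_nz :: "sgn list \<Rightarrow> nat \<Rightarrow> nat \<Rightarrow> bool" where
  "cons_nz l i j \<longleftrightarrow> i < j \<and> j < length l \<and> l ! i \<noteq> SZero \<and> l ! j \<noteq> SZero \<and>
      (\<forall>r. i < r \<and> r < j \<longrightarrow> l ! r = SZero)"

definition gaps :: "sgn list \<Rightarrow> (nat \<times> nat) set" where
  "gaps l = {(i, j). cons_nz l i j \<and> ((l ! i \<noteq> l ! j) = even (j - i - 1))}"

definition zpos :: "sgn list \<Rightarrow> nat set" where
  "zpos l = {i. i < length l \<and> l ! i = SZero}"

lemma finite_gaps: "finite (gaps l)"
proof -
  have "gaps l \<subseteq> {..<length l} \<times> {..<length l}"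
    by (auto simp: gaps_def cons_nz_def)
  then show ?thesis by (rule finite_subset) auto
qed

lemma m_val_alt: "m_val l = card (zpos l) + card (gaps l)"
proof -
  have fe: "finite (even_gaps l)" "finite (odd_gaps l)"
    by (rule finite_subset[of _ "{..<length l} \<times> {..<length l}"], auto simp: even_gaps_def odd_gaps_def)+
  have "gaps l = even_gaps l \<union> odd_gaps l"
    by (auto simp: gaps_def cons_nz_def even_gaps_def odd_gaps_def)
  moreover have "even_gaps l \<inter> odd_gaps l = {}"
    by (auto simp: even_gaps_def odd_gaps_def)
  ultimately have "card (gaps l) = card (even_gaps l) + card (odd_gaps l)"
    using fe card_Un_disjoint by metis
  then show ?thesis by (simp add: m_val_def zpos_def)
qed

lemma cons_unique: "cons_nz l i j \<Longrightarrow> cons_nz l i j' \<Longrightarrow> j = j'"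
  unfolding cons_nz_def by (metis linorder_neqE_nat)

lemma cons_disj: "cons_nz l i j \<Longrightarrow> cons_nz l a b \<Longrightarrow> a < i \<Longrightarrow> b \<le> i"
  unfolding cons_nz_def by (metis not_le)

lemma prod_sign:
  fixes f :: "'a \<Rightarrow> real"
  assumes "finite A" "\<forall>r\<in>A. f r \<noteq> 0"
  shows "prod f A \<noteq> 0 \<and> (0 < prod f A \<longleftrightarrow> even (card {r\<in>A. f r < 0}))"
  using assms
proof (induction A rule: finite_induct)
  case empty
  then show ?case by simp
next
  case (insert a B)
  have fin: "finite {r\<in>B. f r < 0}" using insert by auto
  have "{r\<in>insert a B. f r < 0} = (if f a < 0 then insert a {r\<in>B. f r < 0} else {r\<in>B. f r < 0})"
    by auto
  moreover have "a \<notin> {r\<in>B. f r < 0}" using insert by auto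
  ultimately have c: "card {r\<in>insert a B. f r < 0} = (if f a < 0 then Suc (card {r\<in>B. f r < 0}) else card {r\<in>B. f r < 0})"
    using fin by auto
  have fa: "f a \<noteq> 0" using insert by auto
  have IH: "prod f B \<noteq> 0 \<and> (0 < prod f B \<longleftrightarrow> even (card {r\<in>B. f r < 0}))" using insert by auto
  have pB: "prod f B < 0 \<or> prod f B > 0" using IH by linarith
  have fa2: "f a < 0 \<or> f a > 0" using fa by linarith
  show ?case
    using insert(1,2) c pB fa2 IH
    by (auto simp: zero_less_mult_iff mult_less_0_iff)
qed

lemma sg_cases: "sg w = SPlus \<longleftrightarrow> w > 0" "sg w = SMinus \<longleftrightarrow> w < 0" "sg w = SZero \<longleftrightarrow> w = 0"
  by (auto simp: sg_def)



lemma dvd_prod_roots: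
  fixes p :: "real poly"
  assumes "finite A" "inj_on t A" "\<forall>r\<in>A. poly p (t r) = 0"
  shows "(\<Prod>r\<in>A. [:- t r, 1:]) dvd p"
  using assms
proof (induction A rule: finite_induct)
  case empty
  then show ?case by simp
next
  case (insert a B)
  then have "(\<Prod>r\<in>B. [:- t r, 1:]) dvd p" by auto
  then obtain q where q: "p = (\<Prod>r\<in>B. [:- t r, 1:]) * q" by (auto elim: dvdE)
  have "poly (\<Prod>r\<in>B. [:- t r, 1:]) (t a) \<noteq> 0"
    using insert by (auto simp: poly_prod inj_on_def)
  moreover have "poly p (t a) = 0" using insert by auto
  ultimately have "poly q (t a) = 0" using q by auto
  then have "[:- t a, 1:] dvd q" by (simp add: poly_eq_0_iff_dvd)
  then have "[:- t a, 1:] * (\<Prod>r\<in>B. [:- t r, 1:]) dvd q * (\<Prod>r\<in>B. [:- t r, 1:])"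
    by (rule mult_dvd_mono) simp
  then show ?case using q insert(1,2) by (simp add: mult.commute)
qed

lemma interval_card: "card {r::nat. i < r \<and> r < j} = j - i - 1"
proof -
  have "{r::nat. i < r \<and> r < j} = {Suc i..<j}" by auto
  then show ?thesis by simp
qed

lemma prod_pair_sign:
  fixes t :: "nat \<Rightarrow> real"
  assumes mono: "\<And>i j. i < j \<Longrightarrow> j < length l \<Longrightarrow> t i < t j"
    and c: "cons_nz l i j"
  shows "(\<Prod>r\<in>zpos l. (t i - t r) * (t j - t r)) \<noteq> 0 \<and>
         (0 < (\<Prod>r\<in>zpos l. (t i - t r) * (t j - t r)) \<longleftrightarrow> even (j - i - 1))"
proof -
  have fin: "finite (zpos l)" by (auto simp: zpos_def)
  have ij: "i < j" "j < length l" "l ! i \<noteq> SZero" "l ! j \<noteq> SZero" using c by (auto simp: cons_nz_def)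
  have nz: "\<forall>r\<in>zpos l. (t i - t r) * (t j - t r) \<noteq> 0"
  proof
    fix r assume r: "r \<in> zpos l"
    then have "r \<noteq> i" "r \<noteq> j" "r < length l" using ij by (auto simp: zpos_def)
    then have "t i \<noteq> t r" "t j \<noteq> t r"
      using mono ij by (metis less_trans linorder_neq_iff order_less_irrefl)+
    then show "(t i - t r) * (t j - t r) \<noteq> 0" by auto
  qed
  have neg: "{r\<in>zpos l. (t i - t r) * (t j - t r) < 0} = {r. i < r \<and> r < j}"
  proof (intro set_eqI iffI)
    fix r assume r: "r \<in> {r\<in>zpos l. (t i - t r) * (t j - t r) < 0}"
    then have rl: "r < length l" "r \<noteq> i" "r \<noteq> j" using ij by (auto simp: zpos_def)
    show "r \<in> {r. i < r \<and> r < j}"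
    proof (rule ccontr)
      assume "r \<notin> {r. i < r \<and> r < j}"
      then have "r < i \<or> j < r" using rl by auto
      then show False
      proof
        assume "r < i" then have "t r < t i" "t r < t j" using mono ij by auto
        then show False using r by (auto simp: mult_less_0_iff)
      next
        assume "j < r" then have "t i < t r" "t j < t r" using mono rl ij by auto
        then show False using r by (auto simp: mult_less_0_iff)
      qed
    qed
  next
    fix r assume r: "r \<in> {r. i < r \<and> r < j}"
    then have "l ! r = SZero" using c by (auto simp: cons_nz_def)
    then have "r \<in> zpos l" using r ij by (auto simp: zpos_def)
    moreover have "t i < t r" "t r < t j" using r mono ij by auto
    ultimately show "r \<in> {r\<in>zpos l. (t i - t r) * (t j - t r) < 0}"
      by (auto simp: mult_less_0_iff)
  qed
  show ?thesis using prod_sign[OF fin nz] neg interval_card by metis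
qed

lemma necessity:
  fixes t :: "nat \<Rightarrow> real" and p :: "real poly"
  assumes mono: "\<And>i j. i < j \<Longrightarrow> j < n \<Longrightarrow> t i < t j"
    and p0: "p \<noteq> 0"
    and l: "l = map (\<lambda>i. sg (poly p (t i))) [0..<n]"
  shows "m_val l \<le> degree p"
proof -
  have len: "length l = n" using l by simp
  have li: "\<And>i. i < n \<Longrightarrow> l ! i = sg (poly p (t i))" using l by simp
  have inj: "inj_on t {..<n}"
    by (rule inj_onI) (metis lessThan_iff linorder_neq_iff mono order_less_irrefl)
  have fin: "finite (zpos l)" by (auto simp: zpos_def)
  have zsub: "zpos l \<subseteq> {..<n}" by (auto simp: zpos_def len)
  have roots: "\<forall>r\<in>zpos l. poly p (t r) = 0" by (auto simp: zpos_def len li sg_cases)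
  define P where "P = (\<Prod>r\<in>zpos l. [:- t r, 1:])"
  have "P dvd p" unfolding P_def
    by (rule dvd_prod_roots[OF fin inj_on_subset[OF inj zsub] roots])
  then obtain q where q: "p = P * q" by (auto elim: dvdE)
  have P0: "P \<noteq> 0" unfolding P_def by (simp add: fin)
  have q0: "q \<noteq> 0" using q p0 by auto
  have degP: "degree P = card (zpos l)" unfolding P_def
    by (subst degree_prod_eq_sum_degree) auto
  have degp: "degree p = card (zpos l) + degree q"
    using q P0 q0 degP degree_mult_eq by metis
  have polyP: "\<And>y. poly P y = (\<Prod>r\<in>zpos l. (y - t r))"
    by (simp add: P_def poly_prod)
  have gq: "poly q (t i) * poly q (t j) < 0" if g: "(i, j) \<in> gaps l" for i j
  proof -
    have c: "cons_nz l i j" using g by (auto simp: gaps_def)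
    have ij: "i < j" "j < n" "l ! i \<noteq> SZero" "l ! j \<noteq> SZero" using c len by (auto simp: cons_nz_def)
    have ps: "(\<Prod>r\<in>zpos l. (t i - t r) * (t j - t r)) \<noteq> 0 \<and>
         (0 < (\<Prod>r\<in>zpos l. (t i - t r) * (t j - t r)) \<longleftrightarrow> even (j - i - 1))"
      by (rule prod_pair_sign[OF _ c]) (use mono len in auto)
    have PP: "poly P (t i) * poly P (t j) = (\<Prod>r\<in>zpos l. (t i - t r) * (t j - t r))"
      by (simp add: polyP prod.distrib)
    have pp: "poly p (t i) * poly p (t j) = (poly P (t i) * poly P (t j)) * (poly q (t i) * poly q (t j))"
      using q by (simp add: algebra_simps)
    have pi: "poly p (t i) \<noteq> 0" "poly p (t j) \<noteq> 0" using ij li[of i] li[of j] sg_cases(3) by auto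
    have gap: "(l ! i \<noteq> l ! j) = even (j - i - 1)" using g by (auto simp: gaps_def)
    have neq: "l ! i \<noteq> l ! j \<longleftrightarrow> poly p (t i) * poly p (t j) < 0"
      using pi li[of i] li[of j] ij
      by (auto simp: sg_def mult_less_0_iff linorder_neq_iff)
    show ?thesis
    proof (cases "even (j - i - 1)")
      case True
      then have "poly p (t i) * poly p (t j) < 0" using gap neq by simp
      moreover have "poly P (t i) * poly P (t j) > 0" using ps PP True by simp
      ultimately show ?thesis using pp by (auto simp: mult_less_0_iff zero_less_mult_iff)
    next
      case False
      then have "\<not> poly p (t i) * poly p (t j) < 0" using gap neq by simp
      then have "poly p (t i) * poly p (t j) > 0" using pi
        by (metis linorder_neqE_linordered_idom mult_eq_0_iff)
      moreover have "poly P (t i) * poly P (t j) < 0" using ps PP False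
        by (metis linorder_neqE_linordered_idom)
      ultimately show ?thesis using pp by (auto simp: mult_less_0_iff zero_less_mult_iff)
    qed
  qed
  have "\<forall>g\<in>gaps l. \<exists>x. t (fst g) < x \<and> x < t (snd g) \<and> poly q x = 0"
  proof
    fix g assume g: "g \<in> gaps l"
    obtain i j where gij: "g = (i, j)" by force
    have "i < j" "j < n" using g gij len by (auto simp: gaps_def cons_nz_def)
    then have "t i < t j" using mono by auto
    then show "\<exists>x. t (fst g) < x \<and> x < t (snd g) \<and> poly q x = 0"
      using poly_IVT[OF _ gq] g gij by auto
  qed
  then obtain rt where rt: "\<And>g. g \<in> gaps l \<Longrightarrow> t (fst g) < rt g \<and> rt g < t (snd g) \<and> poly q (rt g) = 0"
    by metis
  have "inj_on rt (gaps l)"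
  proof (rule inj_onI)
    fix g h assume g: "g \<in> gaps l" and h: "h \<in> gaps l" and e: "rt g = rt h"
    obtain i j where gij: "g = (i, j)" by force
    obtain a b where hab: "h = (a, b)" by force
    have cg: "cons_nz l i j" and ch: "cons_nz l a b" using g h gij hab by (auto simp: gaps_def)
    have bd: "j < n" "b < n" using cg ch len by (auto simp: cons_nz_def)
    have r1: "t i < rt g" "rt g < t j" "t a < rt h" "rt h < t b" using rt[OF g] rt[OF h] gij hab by auto
    have tle: "\<And>x y. x \<le> y \<Longrightarrow> y < n \<Longrightarrow> t x \<le> t y"
      using mono by (metis le_less)
    show "g = h"
    proof (cases i a rule: linorder_cases)
      case less
      then have "j \<le> a" using cons_disj[OF ch cg] by auto
      then have "t j \<le> t a" using tle bd ch by (auto simp: cons_nz_def)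
      then show ?thesis using r1 e by auto
    next
      case equal
      then show ?thesis using cons_unique cg ch gij hab by metis
    next
      case greater
      then have "b \<le> i" using cons_disj[OF cg ch] by auto
      then have "t b \<le> t i" using tle bd cg by (auto simp: cons_nz_def)
      then show ?thesis using r1 e by auto
    qed
  qed
  moreover have "rt ` gaps l \<subseteq> {x. poly q x = 0}" using rt by auto
  ultimately have "card (gaps l) \<le> card {x. poly q x = 0}"
    using card_inj_on_le poly_roots_finite[OF q0] by metis
  also have "\<dots> \<le> degree q" by (rule card_poly_roots_bound[OF q0])
  finally show ?thesis using degp m_val_alt by simp
qed



lemma sufficiency:
  fixes t :: "nat \<Rightarrow> real"
  assumes mono: "\<And>i j. i < j \<Longrightarrow> j < n \<Longrightarrow> t i < t j"
    and len: "length l = n"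
  shows "\<exists>p. p \<noteq> 0 \<and> degree p \<le> m_val l \<and> (\<forall>i<n. sg (poly p (t i)) = l ! i)"
proof -
  define x where "x g = (t (fst g) + t (Suc (fst g))) / 2" for g :: "nat \<times> nat"
  have fin: "finite (zpos l)" by (auto simp: zpos_def)
  have fing: "finite (gaps l)" by (rule finite_gaps)
  define Q where "Q = (\<Prod>r\<in>zpos l. [:- t r, 1:]) * (\<Prod>g\<in>gaps l. [:- x g, 1:])"
  have Q0: "Q \<noteq> 0" unfolding Q_def using fin fing by simp
  have degQ: "degree Q \<le> m_val l"
  proof -
    have "degree Q \<le> degree (\<Prod>r\<in>zpos l. [:- t r, 1:]) + degree (\<Prod>g\<in>gaps l. [:- x g, 1:])"
      unfolding Q_def by (rule degree_mult_le)
    also have "degree (\<Prod>r\<in>zpos l. [:- t r, 1:]) = card (zpos l)"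
      by (subst degree_prod_eq_sum_degree) auto
    also have "degree (\<Prod>g\<in>gaps l. [:- x g, 1:]) = card (gaps l)"
      by (subst degree_prod_eq_sum_degree) auto
    finally show ?thesis by (simp add: m_val_alt)
  qed
  have polyQ: "\<And>y. poly Q y = (\<Prod>r\<in>zpos l. (y - t r)) * (\<Prod>g\<in>gaps l. (y - x g))"
    by (simp add: Q_def poly_prod)
  have xg: "t (fst g) < x g \<and> x g < t (Suc (fst g))" if g: "g \<in> gaps l" for g
  proof -
    have "fst g < snd g" "snd g < n" using g len by (auto simp: gaps_def cons_nz_def)
    then have "t (fst g) < t (Suc (fst g))" using mono[of "fst g" "Suc (fst g)"] by auto
    then show ?thesis by (simp add: x_def)
  qed
  have tle: "\<And>a b. a \<le> b \<Longrightarrow> b < n \<Longrightarrow> t a \<le> t b"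
    using mono by (metis le_less)
  have Qz: "poly Q (t i) = 0" if "i < n" "l ! i = SZero" for i
  proof -
    have "i \<in> zpos l" using that len by (auto simp: zpos_def)
    then have "(\<Prod>r\<in>zpos l. (t i - t r)) = 0" using fin by (auto intro: prod_zero)
    then show ?thesis by (simp add: polyQ)
  qed
  have xne: "x g \<noteq> t i" if g: "g \<in> gaps l" and i: "i < n" "l ! i \<noteq> SZero" for g i
  proof -
    obtain a b where gab: "g = (a, b)" by force
    have c: "cons_nz l a b" using g gab by (auto simp: gaps_def)
    have ab: "a < b" "b < n" using c len by (auto simp: cons_nz_def)
    have x1: "t a < x g" "x g < t (Suc a)" using xg[OF g] gab by auto
    show ?thesis
    proof (cases "i \<le> a")
      case True then show ?thesis using x1 tle[of i a] ab by auto
    next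
      case False
      then have "Suc a \<le> i" by auto
      then show ?thesis using x1 tle[of "Suc a" i] i by auto
    qed
  qed
  have Qnz: "poly Q (t i) \<noteq> 0" if i: "i < n" "l ! i \<noteq> SZero" for i
  proof -
    have "\<forall>r\<in>zpos l. t i - t r \<noteq> 0"
    proof
      fix r assume "r \<in> zpos l"
      then have "r \<noteq> i" "r < n" using i len by (auto simp: zpos_def)
      then show "t i - t r \<noteq> 0" using mono i by (metis linorder_neq_iff order_less_irrefl right_minus_eq)
    qed
    moreover have "\<forall>g\<in>gaps l. t i - x g \<noteq> 0" using xne i by fastforce
    ultimately show ?thesis using fin fing by (simp add: polyQ)
  qed
  have Qpair: "0 < poly Q (t i) * poly Q (t j) \<longleftrightarrow> l ! i = l ! j" if c: "cons_nz l i j" for i j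
  proof -
    have ij: "i < j" "j < n" "l ! i \<noteq> SZero" "l ! j \<noteq> SZero" using c len by (auto simp: cons_nz_def)
    have ps: "(\<Prod>r\<in>zpos l. (t i - t r) * (t j - t r)) \<noteq> 0 \<and>
         (0 < (\<Prod>r\<in>zpos l. (t i - t r) * (t j - t r)) \<longleftrightarrow> even (j - i - 1))"
      by (rule prod_pair_sign[OF _ c]) (use mono len in auto)
    have nzg: "\<forall>g\<in>gaps l. (t i - x g) * (t j - x g) \<noteq> 0"
      using xne ij less_trans[OF ij(1,2)] by (metis eq_iff_diff_eq_0 mult_eq_0_iff)
    have negs: "{g\<in>gaps l. (t i - x g) * (t j - x g) < 0} = gaps l \<inter> {(i, j)}"
    proof (intro set_eqI iffI)
      fix g assume g: "g \<in> {g\<in>gaps l. (t i - x g) * (t j - x g) < 0}"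
      then have gg: "g \<in> gaps l" by auto
      obtain a b where gab: "g = (a, b)" by force
      have ca: "cons_nz l a b" using gg gab by (auto simp: gaps_def)
      have ab: "a < b" "b < n" "l ! a \<noteq> SZero" using ca len by (auto simp: cons_nz_def)
      have x1: "t a < x g" "x g < t (Suc a)" using xg[OF gg] gab by auto
      have tij: "t i < t j" using mono ij by auto
      have btw: "t i < x g \<and> x g < t j" using g tij by (auto simp: mult_less_0_iff)
      have "a = i"
      proof (cases a i rule: linorder_cases)
        case less
        then have "b \<le> i" using cons_disj[OF c ca] by auto
        then have "t (Suc a) \<le> t i" using tle[of "Suc a" i] ab ij by auto
        then show ?thesis using x1 btw by auto
      next
        case equal then show ?thesis .
      next
        case greater
        show ?thesis
        proof (cases "a < j")
          case True
          then have "l ! a = SZero" using c greater by (auto simp: cons_nz_def)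
          then show ?thesis using ab by auto
        next
          case False
          then have "t j \<le> t a" using tle[of j a] ab by auto
          then show ?thesis using x1 btw by auto
        qed
      qed
      then have "b = j" using cons_unique[OF c] ca by auto
      then show "g \<in> gaps l \<inter> {(i, j)}" using gg gab \<open>a = i\<close> by auto
    next
      fix g assume g: "g \<in> gaps l \<inter> {(i, j)}"
      then have gg: "g \<in> gaps l" and gij: "g = (i, j)" by auto
      have x1: "t i < x g" "x g < t (Suc i)" using xg[OF gg] gij by auto
      have "t (Suc i) \<le> t j" using tle[of "Suc i" j] ij by auto
      then show "g \<in> {g\<in>gaps l. (t i - x g) * (t j - x g) < 0}"
        using gg x1 by (auto simp: mult_less_0_iff)
    qed
    have gs: "(\<Prod>g\<in>gaps l. (t i - x g) * (t j - x g)) \<noteq> 0 \<and>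
       (0 < (\<Prod>g\<in>gaps l. (t i - x g) * (t j - x g)) \<longleftrightarrow> (i, j) \<notin> gaps l)"
    proof -
      have "card (gaps l \<inter> {(i, j)}) = (if (i, j) \<in> gaps l then 1 else 0)" by auto
      then show ?thesis using prod_sign[OF fing nzg] negs by (auto split: if_splits)
    qed
    have QQ: "poly Q (t i) * poly Q (t j) = (\<Prod>r\<in>zpos l. (t i - t r) * (t j - t r)) *
                 (\<Prod>g\<in>gaps l. (t i - x g) * (t j - x g))"
      by (simp add: polyQ prod.distrib mult_ac)
    have gapiff: "(i, j) \<in> gaps l \<longleftrightarrow> ((l ! i \<noteq> l ! j) = even (j - i - 1))"
      using c by (simp add: gaps_def)
    define A where "A = (\<Prod>r\<in>zpos l. (t i - t r) * (t j - t r))"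
    define B where "B = (\<Prod>g\<in>gaps l. (t i - x g) * (t j - x g))"
    have A: "A \<noteq> 0" "0 < A \<longleftrightarrow> even (j - i - 1)" using ps A_def by auto
    have B: "B \<noteq> 0" "0 < B \<longleftrightarrow> (i, j) \<notin> gaps l" using gs B_def by auto
    have "0 < A * B \<longleftrightarrow> l ! i = l ! j"
      using A B gapiff by (auto simp: zero_less_mult_iff linorder_neq_iff)
    then show ?thesis using QQ A_def B_def by simp
  qed
  show ?thesis
  proof (cases "\<exists>i<n. l ! i \<noteq> SZero")
    case False
    then have "\<forall>i<n. sg (poly Q (t i)) = l ! i" using Qz sg_cases(3) by metis
    then show ?thesis using Q0 degQ by blast
  next
    case True
    define i0 where "i0 = (LEAST i. i < n \<and> l ! i \<noteq> SZero)"
    have i0: "i0 < n" "l ! i0 \<noteq> SZero" using LeastI_ex[OF True[unfolded Bex_def[symmetric]]]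
      unfolding i0_def by auto
    have i0min: "\<And>i. i < n \<Longrightarrow> l ! i \<noteq> SZero \<Longrightarrow> i0 \<le> i"
      unfolding i0_def by (auto intro: Least_le)
    define c :: real where "c = (if sg (poly Q (t i0)) = l ! i0 then 1 else -1)"
    define p where "p = smult c Q"
    have cc: "c * c = 1" by (simp add: c_def)
    have p0: "p \<noteq> 0" using Q0 by (simp add: p_def c_def)
    have degp: "degree p \<le> m_val l" using degQ by (simp add: p_def)
    have pv: "\<And>y. poly p y = c * poly Q y" by (simp add: p_def)
    have ppair: "0 < poly p (t i) * poly p (t j) \<longleftrightarrow> l ! i = l ! j" if "cons_nz l i j" for i j
    proof -
      have "poly p (t i) * poly p (t j) = (c * c) * (poly Q (t i) * poly Q (t j))"
        by (simp add: pv algebra_simps)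
      then show ?thesis using Qpair[OF that] cc by simp
    qed
    have pnz: "poly p (t i) \<noteq> 0" if "i < n" "l ! i \<noteq> SZero" for i
      using Qnz[OF that] by (simp add: pv c_def)
    have main: "sg (poly p (t i)) = l ! i" if "i < n" "l ! i \<noteq> SZero" for i
      using that
    proof (induction i rule: less_induct)
      case (less i)
      show ?case
      proof (cases "\<exists>k<i. l ! k \<noteq> SZero")
        case False
        then have "i = i0" using i0min[OF less.prems] i0 by (metis le_neq_implies_less)
        have "poly Q (t i0) \<noteq> 0" using Qnz i0 by auto
        then show ?thesis using \<open>i = i0\<close> i0 pv
          by (cases "l ! i0") (auto simp: c_def sg_def mult_less_0_iff zero_less_mult_iff)
      next
        case True
        define k where "k = Max {k. k < i \<and> l ! k \<noteq> SZero}"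
        have fk: "finite {k. k < i \<and> l ! k \<noteq> SZero}" by auto
        have ne: "{k. k < i \<and> l ! k \<noteq> SZero} \<noteq> {}" using True by auto
        have k: "k < i" "l ! k \<noteq> SZero" using Max_in[OF fk ne] unfolding k_def by auto
        have kmax: "\<And>r. k < r \<Longrightarrow> r < i \<Longrightarrow> l ! r = SZero"
          using Max_ge[OF fk] unfolding k_def by (metis (mono_tags, lifting) leD mem_Collect_eq)
        have ck: "cons_nz l k i" using k kmax less.prems len by (auto simp: cons_nz_def)
        have IH: "sg (poly p (t k)) = l ! k" using less.IH[OF k(1)] k less.prems by auto
        have "poly p (t i) \<noteq> 0" using pnz less.prems by auto
        then show ?thesis using ppair[OF ck] IH k(2) less.prems(2)
          by (cases "l ! i"; cases "l ! k") (auto simp: sg_def zero_less_mult_iff split: if_splits)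
      qed
    qed
    have "\<forall>i<n. sg (poly p (t i)) = l ! i"
    proof (intro allI impI)
      fix i assume i: "i < n"
      show "sg (poly p (t i)) = l ! i"
      proof (cases "l ! i = SZero")
        case True then show ?thesis using Qz[OF i True] by (simp add: pv sg_def)
      next
        case False then show ?thesis using main i by auto
      qed
    qed
    then show ?thesis using p0 degp by blast
  qed
qed



definition zon :: "nat \<Rightarrow> (nat \<Rightarrow> 'a::euclidean_space) \<Rightarrow> 'a set" where
  "zon n v = {\<Sum>i<n. c i *\<^sub>R v i | c. \<forall>i<n. 0 \<le> c i \<and> c i \<le> 1}"

definition Gf :: "nat \<Rightarrow> (nat \<Rightarrow> 'a::euclidean_space) \<Rightarrow> sgn list \<Rightarrow> 'a set" where
  "Gf n v l = {\<Sum>i<n. c i *\<^sub>R v i | c. \<forall>i<n. 0 \<le> c i \<and> c i \<le> 1 \<and>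
      (l ! i = SPlus \<longrightarrow> c i = 1) \<and> (l ! i = SMinus \<longrightarrow> c i = 0)}"

definition sv :: "nat \<Rightarrow> (nat \<Rightarrow> 'a::euclidean_space) \<Rightarrow> 'a \<Rightarrow> sgn list" where
  "sv n v a = map (\<lambda>i. sg (a \<bullet> v i)) [0..<n]"

definition Mx :: "nat \<Rightarrow> (nat \<Rightarrow> 'a::euclidean_space) \<Rightarrow> 'a \<Rightarrow> real" where
  "Mx n v a = (\<Sum>i<n. max 0 (a \<bullet> v i))"

lemma inner_comb: "a \<bullet> (\<Sum>i<n. c i *\<^sub>R v i) = (\<Sum>i<n. c i * (a \<bullet> v i))"
  by (simp add: inner_sum_right)

lemma cmul_le: "0 \<le> c \<Longrightarrow> c \<le> 1 \<Longrightarrow> c * w \<le> max 0 (w::real)"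
proof (cases "w \<ge> 0")
  case True
  assume "0 \<le> c" "c \<le> 1"
  then have "c * w \<le> w" using True by (simp add: mult_left_le_one_le)
  then show ?thesis by simp
next
  case False
  assume "0 \<le> c" "c \<le> 1"
  then have "c * w \<le> 0" using False by (simp add: mult_nonneg_nonpos)
  then show ?thesis by simp
qed

lemma comb_le:
  assumes "\<forall>i<n. 0 \<le> c i \<and> c i \<le> (1::real)"
  shows "a \<bullet> (\<Sum>i<n. c i *\<^sub>R v i) \<le> Mx n v a"
  unfolding inner_comb Mx_def
proof (rule sum_mono)
  fix i assume "i \<in> {..<n}"
  then have "0 \<le> c i" "c i \<le> 1" using assms by auto
  then show "c i * (a \<bullet> v i) \<le> max 0 (a \<bullet> v i)"
    using cmul_le by blast
qed

lemma comb_eq: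
  assumes c: "\<forall>i<n. 0 \<le> c i \<and> c i \<le> (1::real)"
  shows "a \<bullet> (\<Sum>i<n. c i *\<^sub>R v i) = Mx n v a \<longleftrightarrow>
         (\<forall>i<n. (a \<bullet> v i > 0 \<longrightarrow> c i = 1) \<and> (a \<bullet> v i < 0 \<longrightarrow> c i = 0))"
proof -
  have nn: "\<forall>i\<in>{..<n}. 0 \<le> max 0 (a \<bullet> v i) - c i * (a \<bullet> v i)"
  proof
    fix i assume "i \<in> {..<n}"
    then have "0 \<le> c i" "c i \<le> 1" using c by auto
    then show "0 \<le> max 0 (a \<bullet> v i) - c i * (a \<bullet> v i)"
      using cmul_le[of "c i" "a \<bullet> v i"] by linarith
  qed
  have e1: "Mx n v a - a \<bullet> (\<Sum>i<n. c i *\<^sub>R v i) = (\<Sum>i<n. max 0 (a \<bullet> v i) - c i * (a \<bullet> v i))"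
    unfolding inner_comb Mx_def by (rule sum_subtractf[symmetric])
  have "a \<bullet> (\<Sum>i<n. c i *\<^sub>R v i) = Mx n v a \<longleftrightarrow>
        (\<Sum>i<n. max 0 (a \<bullet> v i) - c i * (a \<bullet> v i)) = 0"
    using e1 by linarith
  also have "\<dots> \<longleftrightarrow> (\<forall>i\<in>{..<n}. max 0 (a \<bullet> v i) - c i * (a \<bullet> v i) = 0)"
    using sum_nonneg_eq_0_iff[of "{..<n}" "\<lambda>i. max 0 (a \<bullet> v i) - c i * (a \<bullet> v i)"] nn by simp
  also have "\<dots> \<longleftrightarrow> (\<forall>i<n. (a \<bullet> v i > 0 \<longrightarrow> c i = 1) \<and> (a \<bullet> v i < 0 \<longrightarrow> c i = 0))"
  proof -
    have "max 0 w - ci * w = 0 \<longleftrightarrow> ((w > 0 \<longrightarrow> ci = 1) \<and> (w < 0 \<longrightarrow> ci = 0))" for w ci :: real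
    proof (cases "w > 0")
      case True
      then have "max 0 w - ci * w = (1 - ci) * w" by (simp add: algebra_simps)
      then show ?thesis using True by simp
    next
      case False
      show ?thesis
      proof (cases "w < 0")
        case True
        then have "max 0 w - ci * w = - (ci * w)" by simp
        then show ?thesis using True by simp
      next
        case False
        then have "w = 0" using \<open>\<not> w > 0\<close> by linarith
        then show ?thesis by simp
      qed
    qed
    then show ?thesis by auto
  qed
  finally show ?thesis .
qed

lemma zon_le: "y \<in> zon n v \<Longrightarrow> a \<bullet> y \<le> Mx n v a"
  unfolding zon_def using comb_le by blast

lemma Gf_sv: "Gf n v (sv n v a) = zon n v \<inter> {x. a \<bullet> x = Mx n v a}"
proof (intro set_eqI iffI)
  fix x assume "x \<in> Gf n v (sv n v a)"
  then obtain c where x: "x = (\<Sum>i<n. c i *\<^sub>R v i)" and c: "\<forall>i<n. 0 \<le> c i \<and> c i \<le> 1 \<and>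
      (sv n v a ! i = SPlus \<longrightarrow> c i = 1) \<and> (sv n v a ! i = SMinus \<longrightarrow> c i = 0)"
    unfolding Gf_def by blast
  have "a \<bullet> x = Mx n v a"
    unfolding x using c by (subst comb_eq) (auto simp: sv_def sg_cases)
  moreover have "x \<in> zon n v" unfolding zon_def x using c by blast
  ultimately show "x \<in> zon n v \<inter> {x. a \<bullet> x = Mx n v a}" by auto
next
  fix x assume "x \<in> zon n v \<inter> {x. a \<bullet> x = Mx n v a}"
  then obtain c where x: "x = (\<Sum>i<n. c i *\<^sub>R v i)" and c: "\<forall>i<n. 0 \<le> c i \<and> c i \<le> 1"
    and e: "a \<bullet> x = Mx n v a"
    unfolding zon_def by blast
  have "\<forall>i<n. (a \<bullet> v i > 0 \<longrightarrow> c i = 1) \<and> (a \<bullet> v i < 0 \<longrightarrow> c i = 0)"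
    using comb_eq[OF c] e x by blast
  then show "x \<in> Gf n v (sv n v a)"
    unfolding Gf_def x using c by (auto simp: sv_def sg_cases)
qed

lemma Gf_mono: "lam_le l m \<Longrightarrow> length l = n \<Longrightarrow> Gf n v l \<subseteq> Gf n v m"
proof
  fix x assume lm: "lam_le l m" and len: "length l = n" and "x \<in> Gf n v l"
  then obtain c where x: "x = (\<Sum>i<n. c i *\<^sub>R v i)" and c: "\<forall>i<n. 0 \<le> c i \<and> c i \<le> 1 \<and>
      (l ! i = SPlus \<longrightarrow> c i = 1) \<and> (l ! i = SMinus \<longrightarrow> c i = 0)"
    unfolding Gf_def by blast
  have "\<forall>i<n. 0 \<le> c i \<and> c i \<le> 1 \<and>
      (m ! i = SPlus \<longrightarrow> c i = 1) \<and> (m ! i = SMinus \<longrightarrow> c i = 0)"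
  proof (intro allI impI)
    fix i assume i: "i < n"
    show "0 \<le> c i \<and> c i \<le> 1 \<and> (m ! i = SPlus \<longrightarrow> c i = 1) \<and> (m ! i = SMinus \<longrightarrow> c i = 0)"
    proof -
      have "l ! i = m ! i \<or> m ! i = SZero" using lm i len by (auto simp: lam_le_def sgn_le_def)
      then show ?thesis using c i by auto
    qed
  qed
  then show "x \<in> Gf n v m" unfolding Gf_def x by blast
qed

lemma Gf_order:
  assumes len: "length l = n" and sub: "Gf n v l \<subseteq> Gf n v (sv n v b)"
  shows "lam_le l (sv n v b)"
proof -
  let ?m = "sv n v b"
  have "sgn_le (l ! i) (?m ! i)" if i: "i < n" for i
  proof (rule ccontr)
    assume "\<not> sgn_le (l ! i) (?m ! i)"
    then have ne: "l ! i \<noteq> ?m ! i" "?m ! i \<noteq> SZero" by (auto simp: sgn_le_def)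
    define c where "c j = (if j = i then (if ?m ! i = SPlus then 0 else 1)
                           else (if l ! j = SPlus then 1 else (0::real)))" for j :: nat
    have cb: "\<forall>j<n. 0 \<le> c j \<and> c j \<le> (1::real) \<and>
      (l ! j = SPlus \<longrightarrow> c j = 1) \<and> (l ! j = SMinus \<longrightarrow> c j = 0)"
      using ne by (cases "l ! i"; cases "?m ! i") (auto simp: c_def)
    then have "(\<Sum>j<n. c j *\<^sub>R v j) \<in> Gf n v l" unfolding Gf_def by blast
    then have "(\<Sum>j<n. c j *\<^sub>R v j) \<in> zon n v \<inter> {x. b \<bullet> x = Mx n v b}"
      using sub Gf_sv by blast
    then have "\<forall>j<n. (b \<bullet> v j > 0 \<longrightarrow> c j = 1) \<and> (b \<bullet> v j < 0 \<longrightarrow> c j = 0)"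
      using comb_eq[of n c b v] cb by auto
    then show False using i ne by (cases "?m ! i") (auto simp: sv_def sg_cases c_def)
  qed
  then show ?thesis using len by (auto simp: lam_le_def sv_def)
qed

lemma Gf_nonempty: "Gf n v l \<noteq> {}"
proof -
  define c where "c j = (if l ! j = SPlus then 1 else (0::real))" for j
  have "(\<Sum>j<n. c j *\<^sub>R v j) \<in> Gf n v l" unfolding Gf_def c_def by force
  then show ?thesis by auto
qed

lemma Gf_zero: "Gf n v (replicate n SZero) = zon n v"
  unfolding Gf_def zon_def by auto

lemma zon_polytope: "polytope (zon n v)"
proof -
  have seg: "closed_segment 0 (v i) = {u *\<^sub>R v i | u. 0 \<le> u \<and> u \<le> 1}" for i
    by (auto simp: closed_segment_def)
  have "zon n v = (\<Sum>i\<in>{..<n}. closed_segment 0 (v i))"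
  proof -
    have "(\<Sum>i\<in>{..<n}. closed_segment 0 (v i)) = {sum s {..<n} |s. \<forall>i\<in>{..<n}. s i \<in> closed_segment 0 (v i)}"
      by (rule set_sum_alt) simp
    also have "\<dots> = zon n v"
    proof (intro set_eqI iffI)
      fix x assume "x \<in> {sum s {..<n} |s. \<forall>i\<in>{..<n}. s i \<in> closed_segment 0 (v i)}"
      then obtain s where x: "x = sum s {..<n}" and s: "\<forall>i\<in>{..<n}. \<exists>u. 0 \<le> u \<and> u \<le> 1 \<and> s i = u *\<^sub>R v i"
        unfolding seg by blast
      obtain c where c: "\<forall>i\<in>{..<n}. 0 \<le> c i \<and> c i \<le> 1 \<and> s i = c i *\<^sub>R v i"
        using bchoice[OF s] by blast
      have "x = (\<Sum>i<n. c i *\<^sub>R v i)" unfolding x using c by (auto intro: sum.cong)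
      then show "x \<in> zon n v" unfolding zon_def using c by auto
    next
      fix x assume "x \<in> zon n v"
      then obtain c where x: "x = (\<Sum>i<n. c i *\<^sub>R v i)" and c: "\<forall>i<n. 0 \<le> c i \<and> c i \<le> 1"
        unfolding zon_def by blast
      show "x \<in> {sum s {..<n} |s. \<forall>i\<in>{..<n}. s i \<in> closed_segment 0 (v i)}"
        unfolding seg using x c by blast
    qed
    finally show ?thesis by simp
  qed
  also have "\<dots> = (\<Sum>i\<in>{..<n}. convex hull {0, v i})"
    by (simp add: segment_convex_hull)
  also have "\<dots> = convex hull (\<Sum>i\<in>{..<n}. {0, v i})"
    by (simp add: convex_hull_set_sum)
  finally show ?thesis unfolding polytope_def
    using finite_set_sum[of "{..<n}" "\<lambda>i. {0, v i}"] by auto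
qed

lemma zon_convex: "convex (zon n v)"
  by (rule polytope_imp_convex[OF zon_polytope])

lemma Gf_sv_face: "Gf n v (sv n v a) face_of zon n v"
  unfolding Gf_sv by (rule face_of_Int_supporting_hyperplane_le[OF zon_convex zon_le])

lemma face_is_Gf:
  assumes F: "F face_of zon n v" "F \<noteq> {}" "F \<noteq> zon n v"
  shows "\<exists>a. a \<noteq> 0 \<and> F = Gf n v (sv n v a)"
proof -
  have "F exposed_face_of zon n v"
    using exposed_face_of_polyhedron[OF polytope_imp_polyhedron[OF zon_polytope]] F by auto
  then obtain a b where ab: "zon n v \<subseteq> {x. a \<bullet> x \<le> b}" "F = zon n v \<inter> {x. a \<bullet> x = b}"
    unfolding exposed_face_of_def by blast
  obtain x0 where x0: "x0 \<in> F" using F by auto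
  then have "b \<le> Mx n v a" using ab zon_le by fastforce
  moreover have "Mx n v a \<le> b"
  proof -
    define c where "c j = (if a \<bullet> v j > 0 then 1 else (0::real))" for j
    have cb: "\<forall>j<n. 0 \<le> c j \<and> c j \<le> 1" by (simp add: c_def)
    then have "(\<Sum>j<n. c j *\<^sub>R v j) \<in> zon n v" unfolding zon_def by blast
    moreover have "\<forall>j<n. (a \<bullet> v j > 0 \<longrightarrow> c j = 1) \<and> (a \<bullet> v j < 0 \<longrightarrow> c j = 0)"
      by (simp add: c_def)
    then have "a \<bullet> (\<Sum>j<n. c j *\<^sub>R v j) = Mx n v a"
      using comb_eq[OF cb, of a v] by blast
    ultimately show ?thesis using ab by force
  qed
  ultimately have "b = Mx n v a" by simp
  then have FG: "F = Gf n v (sv n v a)" using ab Gf_sv[of n v a] by simp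
  have "a \<noteq> 0"
  proof
    assume "a = 0"
    then show False using ab F by (cases "b = 0") auto
  qed
  then show ?thesis using FG by blast
qed



definition rk :: "'d::{finite,linorder} \<Rightarrow> nat" where
  "rk k = card {j. j < k}"

lemma rk_less: "rk (k::'d::{finite,linorder}) < CARD('d)"
  unfolding rk_def by (rule psubset_card_mono) auto

lemma rk_mono: "(k::'d::{finite,linorder}) < k' \<Longrightarrow> rk k < rk k'"
  unfolding rk_def by (rule psubset_card_mono) auto

lemma rk_inj: "inj (rk :: 'd::{finite,linorder} \<Rightarrow> nat)"
  by (rule injI) (metis linorder_neqE less_irrefl rk_mono)

lemma rk_bij: "bij_betw (rk :: 'd::{finite,linorder} \<Rightarrow> nat) UNIV {..<CARD('d)}"
proof -
  have "rk ` (UNIV :: 'd set) \<subseteq> {..<CARD('d)}" using rk_less by auto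
  moreover have "card (rk ` (UNIV :: 'd set)) = card {..<CARD('d)}"
    using card_image[OF rk_inj] by simp
  ultimately have "rk ` (UNIV :: 'd set) = {..<CARD('d)}"
    by (intro card_subset_eq) auto
  then show ?thesis using rk_inj by (simp add: bij_betw_def)
qed

lemma moment_nth: "moment_vec x $ k = x ^ rk k"
  by (simp add: moment_vec_def rk_def)

definition pv :: "real ^ ('d::{finite,linorder}) \<Rightarrow> real poly" where
  "pv a = (\<Sum>k\<in>UNIV. monom (a $ k) (rk k))"

lemma poly_pv: "poly (pv a) x = a \<bullet> (moment_vec x :: real ^ ('d::{finite,linorder}))"
  by (simp add: pv_def poly_sum poly_monom inner_vec_def moment_nth)

lemma coeff_pv: "coeff (pv (a :: real ^ ('d::{finite,linorder}))) e = (\<Sum>k\<in>UNIV. if rk k = e then a $ k else 0)"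
  by (simp add: pv_def coeff_sum)

lemma degree_pv: "degree (pv (a :: real ^ ('d::{finite,linorder}))) \<le> CARD('d) - 1"
proof (rule degree_le, intro allI impI)
  fix e assume "CARD('d) - 1 < e"
  have "\<forall>k::'d. rk k \<noteq> e"
  proof
    fix k :: 'd
    have "rk k < CARD('d)" by (rule rk_less)
    then show "rk k \<noteq> e" using \<open>CARD('d) - 1 < e\<close> by linarith
  qed
  then show "coeff (pv a) e = 0" by (simp add: coeff_pv)
qed

lemma pv_nz: "a \<noteq> 0 \<Longrightarrow> pv (a :: real ^ ('d::{finite,linorder})) \<noteq> 0"
proof -
  assume "a \<noteq> 0"
  then obtain k where k: "a $ k \<noteq> 0" by (metis vec_eq_iff zero_index)
  have "coeff (pv a) (rk k) = (\<Sum>k'\<in>UNIV. if k' = k then a $ k' else 0)"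
    unfolding coeff_pv by (rule sum.cong) (auto simp: inj_eq[OF rk_inj])
  also have "\<dots> = a $ k" by simp
  finally show "pv a \<noteq> 0" using k by auto
qed

definition vp :: "real poly \<Rightarrow> real ^ ('d::{finite,linorder})" where
  "vp p = (\<chi> k. coeff p (rk k))"

lemma vp_inner:
  assumes "degree p < CARD('d)"
  shows "(vp p :: real ^ ('d::{finite,linorder})) \<bullet> moment_vec x = poly p x"
proof -
  have "(vp p :: real ^ ('d::{finite,linorder})) \<bullet> moment_vec x = (\<Sum>k\<in>(UNIV::'d set). coeff p (rk k) * x ^ rk k)"
    by (simp add: vp_def inner_vec_def moment_nth)
  also have "\<dots> = (\<Sum>e\<in>{..<CARD('d)}. coeff p e * x ^ e)"
    using sum.reindex_bij_betw[OF rk_bij, of "\<lambda>e. coeff p e * x ^ e"] by simp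
  also have "\<dots> = (\<Sum>e\<le>degree p. coeff p e * x ^ e)"
  proof (rule sum.mono_neutral_right)
    show "{..degree p} \<subseteq> {..<CARD('d)}" using assms by auto
    show "\<forall>i\<in>{..<CARD('d)} - {..degree p}. coeff p i * x ^ i = 0"
      by (auto simp: coeff_eq_0)
  qed simp
  also have "\<dots> = poly p x" by (simp add: poly_altdef)
  finally show ?thesis .
qed



lemma zon_cyclic:
  "cyclic_zonotope n s = (zon n (\<lambda>i. moment_vec (s (Suc i))) :: (real ^ ('d::{finite,linorder})) set)"
proof (intro set_eqI iffI)
  fix x :: "real ^ ('d::{finite,linorder})"
  assume "x \<in> cyclic_zonotope n s"
  then obtain c where c: "\<forall>i\<in>{1..n}. 0 \<le> c i \<and> c i \<le> 1" and x: "x = (\<Sum>i=1..n. c i *\<^sub>R moment_vec (s i))"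
    unfolding cyclic_zonotope_def by blast
  have "x = (\<Sum>i<n. c (Suc i) *\<^sub>R moment_vec (s (Suc i)))"
    unfolding x by (rule sum_bounds_lt_plus1[symmetric])
  moreover have "\<forall>i<n. 0 \<le> c (Suc i) \<and> c (Suc i) \<le> 1" using c by auto
  ultimately have "\<exists>c'. x = (\<Sum>i<n. c' i *\<^sub>R moment_vec (s (Suc i))) \<and> (\<forall>i<n. 0 \<le> c' i \<and> c' i \<le> 1)"
    by (intro exI[of _ "\<lambda>i. c (Suc i)"]) simp
  then show "x \<in> zon n (\<lambda>i. moment_vec (s (Suc i)))" unfolding zon_def by auto
next
  fix x :: "real ^ ('d::{finite,linorder})"
  assume "x \<in> zon n (\<lambda>i. moment_vec (s (Suc i)))"
  then obtain c where c: "\<forall>i<n. 0 \<le> c i \<and> c i \<le> 1" and x: "x = (\<Sum>i<n. c i *\<^sub>R moment_vec (s (Suc i)))"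
    unfolding zon_def by blast
  define c' where "c' i = c (i - 1)" for i
  have "x = (\<Sum>i<n. c' (Suc i) *\<^sub>R moment_vec (s (Suc i)))" unfolding x c'_def by simp
  also have "\<dots> = (\<Sum>i=1..n. c' i *\<^sub>R moment_vec (s i))" by (rule sum_bounds_lt_plus1)
  finally have "x = (\<Sum>i=1..n. c' i *\<^sub>R moment_vec (s i))" .
  moreover have "\<forall>i\<in>{1..n}. 0 \<le> c' i \<and> c' i \<le> 1" using c by (auto simp: c'_def)
  ultimately show "x \<in> cyclic_zonotope n s" unfolding cyclic_zonotope_def by blast
qed

lemma lam_le_antisym: "lam_le l m \<Longrightarrow> lam_le m l \<Longrightarrow> l = m"
proof -
  assume a: "lam_le l m" "lam_le m l"
  show "l = m"
  proof (rule nth_equalityI)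
    show "length l = length m" using a by (simp add: lam_le_def)
    fix i assume i: "i < length l"
    have "sgn_le (l ! i) (m ! i)" using a(1) i by (simp add: lam_le_def)
    moreover have "sgn_le (m ! i) (l ! i)" using a i by (simp add: lam_le_def)
    ultimately show "l ! i = m ! i" unfolding sgn_le_def by metis
  qed
qed

theorem proposition3p2:
  fixes n :: nat and s :: "nat \<Rightarrow> real"
  assumes "\<And>i j. 1 \<le> i \<Longrightarrow> i < j \<Longrightarrow> j \<le> n \<Longrightarrow> s i < s j"
    and "CARD('d) \<le> n"
  shows "\<exists>f. bij_betw f (proper_faces (cyclic_zonotope n s :: (real ^ ('d::{finite,linorder})) set))
                {l \<in> Lambda n. m_val l \<le> CARD('d) - 1} \<and>
             (\<forall>F\<in>proper_faces (cyclic_zonotope n s :: (real ^ ('d::{finite,linorder})) set).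
                \<forall>G\<in>proper_faces (cyclic_zonotope n s :: (real ^ ('d::{finite,linorder})) set).
                  F \<subseteq> G \<longleftrightarrow> lam_le (f F) (f G))"
proof -
  define t where "t i = s (Suc i)" for i
  define v :: "nat \<Rightarrow> real ^ ('d::{finite,linorder})" where "v i = moment_vec (t i)" for i
  have mono: "t i < t j" if ij: "i < j" "j < n" for i j
  proof -
    have "1 \<le> Suc i" "Suc i < Suc j" "Suc j \<le> n" using ij by auto
    then show ?thesis unfolding t_def by (rule assms(1))
  qed
  have Z: "(cyclic_zonotope n s :: (real ^ ('d::{finite,linorder})) set) = zon n v"
    using zon_cyclic[of n s, where 'd='d] unfolding v_def t_def by simp
  define L where "L = {l \<in> Lambda n. m_val l \<le> CARD('d) - 1}"
  define PF where "PF = proper_faces (zon n v)"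
  have card1: "0 < CARD('d)" by simp
  have svp: "sv n v a = map (\<lambda>i. sg (poly (pv a) (t i))) [0..<n]" for a
    by (simp add: sv_def v_def poly_pv)
  have realize: "\<exists>a. l = sv n v a" if l: "l \<in> L" for l
  proof -
    have len: "length l = n" using l by (simp add: L_def Lambda_def)
    obtain p where p: "p \<noteq> 0" "degree p \<le> m_val l" "\<forall>i<n. sg (poly p (t i)) = l ! i"
      using sufficiency[of n t l, OF mono len] by blast
    have "m_val l \<le> CARD('d) - 1" using l by (simp add: L_def)
    then have dp: "degree p < CARD('d)" using p(2) card1 by linarith
    have "sv n v (vp p) = l"
    proof (rule nth_equalityI)
      show "length (sv n v (vp p)) = length l" using len by (simp add: sv_def)
      fix i assume "i < length (sv n v (vp p))"
      then have i: "i < n" by (simp add: sv_def)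
      have "sv n v (vp p) ! i = sg (vp p \<bullet> v i)" using i by (simp add: sv_def)
      also have "vp p \<bullet> v i = poly p (t i)" unfolding v_def by (rule vp_inner[OF dp])
      also have "sg (poly p (t i)) = l ! i" using p(3) i by simp
      finally show "sv n v (vp p) ! i = l ! i" .
    qed
    then show ?thesis by (intro exI[of _ "vp p"]) simp
  qed
  have svL: "sv n v a \<in> L" if a: "a \<noteq> 0" for a
  proof -
    have "m_val (sv n v a) \<le> degree (pv a)"
      by (rule necessity[of n t, OF mono pv_nz[OF a] svp])
    also have "\<dots> \<le> CARD('d) - 1" by (rule degree_pv)
    finally show ?thesis by (simp add: L_def Lambda_def sv_def)
  qed
  have inPF: "Gf n v l \<in> PF" if l: "l \<in> L" for l
  proof -
    obtain a where a: "l = sv n v a" using realize[OF l] by blast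
    have len: "length l = n" using l by (simp add: L_def Lambda_def)
    have "Gf n v l \<noteq> zon n v"
    proof
      assume "Gf n v l = zon n v"
      then have "Gf n v (replicate n SZero) \<subseteq> Gf n v (sv n v a)" using Gf_zero[of n v] a by (metis order_refl)
      then have "lam_le (replicate n SZero) l" using Gf_order[of "replicate n SZero" n v a] a by simp
      then have allz: "\<forall>i<n. l ! i = SZero" by (auto simp: lam_le_def sgn_le_def)
      have "zpos l = {..<n}" using allz len by (auto simp: zpos_def)
      then have "n \<le> m_val l" by (simp add: m_val_alt)
      moreover have "m_val l \<le> CARD('d) - 1" using l by (simp add: L_def)
      ultimately show False using assms(2) card1 by linarith
    qed
    then show ?thesis unfolding PF_def proper_faces_def
      using Gf_sv_face Gf_nonempty a by blast
  qed
  have bij: "bij_betw (Gf n v) L PF"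
  proof (rule bij_betw_imageI)
    show "inj_on (Gf n v) L"
    proof (rule inj_onI)
      fix l m assume l: "l \<in> L" and m: "m \<in> L" and e: "Gf n v l = Gf n v m"
      obtain a where a: "m = sv n v a" using realize[OF m] by blast
      obtain b where b: "l = sv n v b" using realize[OF l] by blast
      have "lam_le l m" using Gf_order[of l n v a] e a l by (simp add: L_def Lambda_def)
      moreover have "lam_le m l" using Gf_order[of m n v b] e b m by (simp add: L_def Lambda_def)
      ultimately show "l = m" by (rule lam_le_antisym)
    qed
    show "Gf n v ` L = PF"
    proof
      show "Gf n v ` L \<subseteq> PF" using inPF by blast
      show "PF \<subseteq> Gf n v ` L"
      proof
        fix F assume "F \<in> PF"
        then obtain a where "a \<noteq> 0" "F = Gf n v (sv n v a)"
          using face_is_Gf unfolding PF_def proper_faces_def by blast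
        then show "F \<in> Gf n v ` L" using svL by blast
      qed
    qed
  qed
  define f where "f = inv_into L (Gf n v)"
  have fb: "bij_betw f PF L" unfolding f_def by (rule bij_betw_inv_into[OF bij])
  have ford: "F \<subseteq> G \<longleftrightarrow> lam_le (f F) (f G)" if F: "F \<in> PF" and G: "G \<in> PF" for F G
  proof -
    have fF: "f F \<in> L" "Gf n v (f F) = F" using F bij fb unfolding f_def
      by (auto simp: bij_betw_def f_inv_into_f inv_into_into)
    have fG: "f G \<in> L" "Gf n v (f G) = G" using G bij fb unfolding f_def
      by (auto simp: bij_betw_def f_inv_into_f inv_into_into)
    obtain b where b: "f G = sv n v b" using realize[OF fG(1)] by blast
    have lenF: "length (f F) = n" using fF(1) by (simp add: L_def Lambda_def)
    show ?thesis
    proof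
      assume "F \<subseteq> G"
      then show "lam_le (f F) (f G)" using Gf_order[OF lenF, of v b] fF fG b by simp
    next
      assume "lam_le (f F) (f G)"
      then show "F \<subseteq> G" using Gf_mono[OF _ lenF, of "f G" v] fF fG by simp
    qed
  qed
  have "bij_betw f (proper_faces (zon n v)) {l \<in> Lambda n. m_val l \<le> CARD('d) - 1} \<and>
       (\<forall>F\<in>proper_faces (zon n v). \<forall>G\<in>proper_faces (zon n v). F \<subseteq> G \<longleftrightarrow> lam_le (f F) (f G))"
    using fb ford unfolding PF_def L_def by simp
  then show ?thesis unfolding Z by blast
qed

end
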